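(* Let $K:[0,\infty)\to(0,\infty)$ be non-increasing with $K(0)=1$, and for $\sigma>0$ let $K_\sigma(x)=K(x/\sigma)$. Let $\mathcal{X}=\{\mathbf{x}_1,\dots,\mathbf{x}_n\}\subset\mathbb{R}^d$ and let $\mathcal{C}_1,\dots,\mathcal{C}_k$ be a partition of $\mathcal{X}$ into nonempty sets, with $n\ge k+1$. For each $l\in[k]$ suppose $\mathcal{C}_l$ is connected at distance $\delta_l$. For $l\in[n]$ let $e_l$ be the $l$-th smallest eigenvalue of the normalised Laplacian of the graph $\mathcal{G}=(\mathcal{X},K_\sigma)$. Then $$\sum_{l=1}^k e_l\le nk\max_{m\in[k]}K_\sigma(d(\mathcal{C}_m,\mathcal{X}\setminus\mathcal{C}_m)),$$ $$e_{k+1}\ge\min_{l,m\in[k]}\left(\frac{K_\sigma(\delta_l)}{9n^3(k+1)^4}-n^3kK_\sigma(d(\mathcal{C}_m,\mathcal{X}\setminus\mathcal{C}_m))\right).$$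
   Context: $[n]=\{1,\dots,n\}$; $\|\cdot\|$ is the Euclidean norm. For sets $S,U$, $d(S,U)=\inf_{\mathbf{x}\in S,\mathbf{y}\in U}\|\mathbf{x}-\mathbf{y}\|$, with $d(S,\emptyset)=\infty$. A set $S$ is connected at distance $\delta$ if there is no partition of $S$ into $S_1,S_2$ with $d(S_1,S_2)>\delta$. The graph $(\mathcal{X},K_\sigma)$ has affinity matrix $\mathbf{A}_{ij}=K_\sigma(\|\mathbf{x}_i-\mathbf{x}_j\|)$ (including $i=j$), degree matrix $\mathbf{D}=\mathrm{diag}(\sum_j\mathbf{A}_{ij})$ and normalised Laplacian $\mathbf{I}-\mathbf{D}^{-1/2}\mathbf{A}\mathbf{D}^{-1/2}$. Eigenvalues are listed in nondecreasing order. *)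

theory Defs
  imports "HOL-Analysis.Analysis" "Jordan_Normal_Form.Char_Poly"
begin

text \<open>Set distance d(S,U) = inf of pairwise distances, as an extended real
  (the infimum over the empty set is \<infinity>, so d(S,{}) = \<infinity>).\<close>
definition set_dist :: "'a::real_normed_vector set \<Rightarrow> 'a set \<Rightarrow> ereal" where
  "set_dist S U = (INF p \<in> S \<times> U. ereal (norm (fst p - snd p)))"

definition connected_at_dist :: "'a::real_normed_vector set \<Rightarrow> real \<Rightarrow> bool" where
  "connected_at_dist S \<delta> \<longleftrightarrow>
     \<not> (\<exists>S1 S2. S1 \<noteq> {} \<and> S2 \<noteq> {} \<and> S1 \<union> S2 = S \<and> S1 \<inter> S2 = {}
               \<and> set_dist S1 S2 > ereal \<delta>)"

text \<open>K_sigma(x) = K(x/sigma); at x = \<infinity> we use the limit value inf_{t>=0} K t.\<close>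
definition Ksig :: "(real \<Rightarrow> real) \<Rightarrow> real \<Rightarrow> ereal \<Rightarrow> real" where
  "Ksig K \<sigma> r = (if r = \<infinity> then (INF t\<in>{0..}. K t) else K (real_of_ereal r / \<sigma>))"

definition affinity :: "(real \<Rightarrow> real) \<Rightarrow> real \<Rightarrow> nat \<Rightarrow> (nat \<Rightarrow> 'a::real_normed_vector) \<Rightarrow> real mat" where
  "affinity K \<sigma> n x = mat n n (\<lambda>(i,j). K (norm (x i - x j) / \<sigma>))"

definition degree :: "(real \<Rightarrow> real) \<Rightarrow> real \<Rightarrow> nat \<Rightarrow> (nat \<Rightarrow> 'a::real_normed_vector) \<Rightarrow> nat \<Rightarrow> real" where
  "degree K \<sigma> n x i = (\<Sum>j<n. affinity K \<sigma> n x $$ (i,j))"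

definition norm_laplacian :: "(real \<Rightarrow> real) \<Rightarrow> real \<Rightarrow> nat \<Rightarrow> (nat \<Rightarrow> 'a::real_normed_vector) \<Rightarrow> real mat" where
  "norm_laplacian K \<sigma> n x =
     1\<^sub>m n - mat n n (\<lambda>(i,j). affinity K \<sigma> n x $$ (i,j) /
                              (sqrt (degree K \<sigma> n x i) * sqrt (degree K \<sigma> n x j)))"

definition sorted_eigenvalues :: "real mat \<Rightarrow> real list \<Rightarrow> bool" where
  "sorted_eigenvalues M es \<longleftrightarrow> sorted es \<and> length es = dim_row M \<and>
     char_poly M = (\<Prod>a\<leftarrow>es. [:- a, 1:])"

end

theory Submission
  imports Defs "Jordan_Normal_Form.Schur_Decomposition"
begin

lemma mat_entry_facts:
  fixes L B P Q :: "real mat"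
  assumes sim: "similar_mat_wit L B P Q" and Lc: "L \<in> carrier_mat n n"
  shows "\<And>i j. i < n \<Longrightarrow> j < n \<Longrightarrow> (\<Sum>l<n. L$$(i,l) * P$$(l,j)) = (\<Sum>t<n. P$$(i,t) * B$$(t,j))"
    and "\<And>i j. i < n \<Longrightarrow> j < n \<Longrightarrow> (\<Sum>l<n. Q$$(i,l) * P$$(l,j)) = (if i = j then 1 else 0)"
    and "\<And>i j. i < n \<Longrightarrow> j < n \<Longrightarrow> (\<Sum>l<n. P$$(i,l) * Q$$(l,j)) = (if i = j then 1 else 0)"
proof -
  from sim Lc have B: "B \<in> carrier_mat n n" and P: "P \<in> carrier_mat n n" and Q: "Q \<in> carrier_mat n n"
    and PQ: "P * Q = 1\<^sub>m n" and QP: "Q * P = 1\<^sub>m n" and LL: "L = P * B * Q"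
    unfolding similar_mat_wit_def Let_def by auto
  have "L * P = P * B * (Q * P)" using LL B P Q by (simp add: assoc_mult_mat[of _ n n _ n _ n])
  also have "\<dots> = P * B" using QP B P by simp
  finally have LP: "L * P = P * B" .
  have sp: "row M i \<bullet> col N j = (\<Sum>l<n. M$$(i,l) * N$$(l,j))"
    if "M \<in> carrier_mat n n" "N \<in> carrier_mat n n" "i < n" "j < n" for M N :: "real mat" and i j
    using that unfolding scalar_prod_def by (auto intro!: sum.cong simp: lessThan_atLeast0)
  show "(\<Sum>l<n. L$$(i,l) * P$$(l,j)) = (\<Sum>t<n. P$$(i,t) * B$$(t,j))" if "i < n" "j < n" for i j
    using arg_cong[OF LP, of "\<lambda>M. M $$ (i,j)"] that sp[OF Lc P] sp[OF P B] Lc P B by simp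
  show "(\<Sum>l<n. Q$$(i,l) * P$$(l,j)) = (if i = j then 1 else 0)" if "i < n" "j < n" for i j
    using arg_cong[OF QP, of "\<lambda>M. M $$ (i,j)"] that sp[OF Q P] Q P by simp
  show "(\<Sum>l<n. P$$(i,l) * Q$$(l,j)) = (if i = j then 1 else 0)" if "i < n" "j < n" for i j
    using arg_cong[OF PQ, of "\<lambda>M. M $$ (i,j)"] that sp[OF P Q] Q P by simp
qed



definition ipn :: "nat \<Rightarrow> (nat \<Rightarrow> real) \<Rightarrow> (nat \<Rightarrow> real) \<Rightarrow> real" where
  "ipn n u v = (\<Sum>i<n. u i * v i)"

definition mv :: "nat \<Rightarrow> (nat \<Rightarrow> nat \<Rightarrow> real) \<Rightarrow> (nat \<Rightarrow> real) \<Rightarrow> nat \<Rightarrow> real" where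
  "mv n M x i = (\<Sum>l<n. M i l * x l)"

lemma ipn_sym: "ipn n u v = ipn n v u"
  unfolding ipn_def by (simp add: mult.commute)

lemma ipn_cong: "(\<And>r. r < n \<Longrightarrow> u r = u' r) \<Longrightarrow> ipn n u v = ipn n u' v"
  unfolding ipn_def by (auto intro!: sum.cong)

lemma sum_swap_mult: "(\<Sum>r\<in>A. a r * (\<Sum>s\<in>B. b r s * c s)) = (\<Sum>s\<in>B. (\<Sum>r\<in>A. a r * b r s) * (c s::real))"
  by (simp add: sum_distrib_left sum_distrib_right mult.assoc) (rule sum.swap)

lemma ipn_sum_left: "ipn n (\<lambda>r. \<Sum>i\<in>A. a i * f i r) v = (\<Sum>i\<in>A. a i * ipn n (f i) v)"
  unfolding ipn_def by (simp add: sum_distrib_left sum_distrib_right mult.assoc) (rule sum.swap)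

lemma ipn_diff_left: "ipn n (\<lambda>r. u r - w r) v = ipn n u v - ipn n w v"
  unfolding ipn_def by (simp add: left_diff_distrib sum_subtractf)

lemma ipn_scale_left: "ipn n (\<lambda>r. c * u r) v = c * ipn n u v"
  unfolding ipn_def by (simp add: sum_distrib_left mult.assoc)

lemma ipn_self_nonneg: "ipn n u u \<ge> 0"
  unfolding ipn_def by (auto intro: sum_nonneg)

lemma ipn_self_zero: "ipn n u u = 0 \<Longrightarrow> r < n \<Longrightarrow> u r = 0"
  unfolding ipn_def by (subst (asm) sum_nonneg_eq_0_iff) auto

lemma mv_sym:
  assumes "\<And>i j. i < n \<Longrightarrow> j < n \<Longrightarrow> L i j = L j i"
  shows "ipn n (mv n L x) y = ipn n x (mv n L y)"
proof -
  have "ipn n (mv n L x) y = (\<Sum>i<n. \<Sum>l<n. L i l * x l * y i)"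
    unfolding ipn_def mv_def by (simp add: sum_distrib_right)
  also have "\<dots> = (\<Sum>l<n. \<Sum>i<n. L l i * x l * y i)"
    by (subst sum.swap) (auto intro!: sum.cong simp: assms)
  also have "\<dots> = ipn n x (mv n L y)"
    unfolding ipn_def mv_def by (simp add: sum_distrib_left mult_ac)
  finally show ?thesis .
qed

lemma tri_span:
  fixes j :: nat and T :: "nat \<Rightarrow> nat \<Rightarrow> real" and c :: "nat \<Rightarrow> real"
  assumes "\<And>i. i < j \<Longrightarrow> T i i = (1::real) \<and> (\<forall>s>i. T i s = 0)"
    and "\<And>s. s \<ge> j \<Longrightarrow> c s = 0"
  shows "\<exists>a. \<forall>s. c s = (\<Sum>i<j. a i * T i s)"
  using assms
proof (induction j arbitrary: c)
  case 0
  then show ?case by auto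
next
  case (Suc j)
  define c' where "c' s = c s - c j * T j s" for s
  have "\<exists>a. \<forall>s. c' s = (\<Sum>i<j. a i * T i s)"
  proof (rule Suc.IH)
    show "T i i = 1 \<and> (\<forall>s>i. T i s = 0)" if "i < j" for i using Suc.prems(1) that by auto
    show "c' s = 0" if "s \<ge> j" for s
    proof (cases "s = j")
      case True thus ?thesis using Suc.prems(1)[of j] by (simp add: c'_def)
    next
      case False thus ?thesis using Suc.prems that by (simp add: c'_def)
    qed
  qed
  then obtain a where a: "\<And>s. c' s = (\<Sum>i<j. a i * T i s)" by blast
  show ?case
    by (rule exI[of _ "a(j := c j)"]) (auto simp: a[unfolded c'_def, symmetric] c'_def
        intro!: sum.cong)
qed


definition gs_inv where
  "gs_inv n L P e j T u \<longleftrightarrow>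
     (\<forall>i<j. T i i = (1::real) \<and> (\<forall>s>i. T i s = 0)) \<and>
     (\<forall>i<j. u i = (\<lambda>r. \<Sum>s<n. P r s * T i s)) \<and>
     (\<forall>i<j. \<forall>i'<j. i \<noteq> i' \<longrightarrow> ipn n (u i) (u i') = 0) \<and>
     (\<forall>i<j. ipn n (u i) (u i) > 0) \<and>
     (\<forall>i<j. \<forall>r<n. mv n L (u i) r = e i * u i r)"

lemma gs_step:
  fixes L P Q B :: "nat \<Rightarrow> nat \<Rightarrow> real" and e :: "nat \<Rightarrow> real"
  assumes sym: "\<And>i j. i < n \<Longrightarrow> j < n \<Longrightarrow> L i j = L j i"
    and LP: "\<And>i j. i < n \<Longrightarrow> j < n \<Longrightarrow> (\<Sum>l<n. L i l * P l j) = (\<Sum>t<n. P i t * B t j)"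
    and QP: "\<And>i j. i < n \<Longrightarrow> j < n \<Longrightarrow> (\<Sum>l<n. Q i l * P l j) = (if i = j then 1 else 0)"
    and up: "\<And>t j. t < n \<Longrightarrow> j < t \<Longrightarrow> B t j = 0"
    and dg: "\<And>j. j < n \<Longrightarrow> B j j = e j"
    and inv: "gs_inv n L P e j T u" and jn: "j < n"
  shows "\<exists>T u. gs_inv n L P e (Suc j) T u"
proof -
  from inv have T1: "\<And>i. i < j \<Longrightarrow> T i i = 1" and T0: "\<And>i s. i < j \<Longrightarrow> s > i \<Longrightarrow> T i s = 0"
    and uT: "\<And>i. i < j \<Longrightarrow> u i = (\<lambda>r. \<Sum>s<n. P r s * T i s)"
    and orth: "\<And>i i'. i < j \<Longrightarrow> i' < j \<Longrightarrow> i \<noteq> i' \<Longrightarrow> ipn n (u i) (u i') = 0"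
    and pos: "\<And>i. i < j \<Longrightarrow> ipn n (u i) (u i) > 0"
    and eig: "\<And>i r. i < j \<Longrightarrow> r < n \<Longrightarrow> mv n L (u i) r = e i * u i r"
    unfolding gs_inv_def by auto
  define p where "p r = P r j" for r
  define cf where "cf i = ipn n p (u i) / ipn n (u i) (u i)" for i
  define Tj where "Tj s = (if s = j then 1 else 0) - (\<Sum>i<j. cf i * T i s)" for s
  define uj where "uj r = (\<Sum>s<n. P r s * Tj s)" for r
  define T' where "T' = T(j := Tj)"
  define u' where "u' = u(j := uj)"
  have Tjj: "Tj j = 1" using T0 by (simp add: Tj_def)
  have Tj0: "Tj s = 0" if "s > j" for s using T0 that by (simp add: Tj_def)
  have uj_eq: "uj r = p r - (\<Sum>i<j. cf i * u i r)" for r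
  proof -
    have "uj r = (\<Sum>s<n. P r s * (if s = j then 1 else 0)) - (\<Sum>s<n. \<Sum>i<j. P r s * (cf i * T i s))"
      unfolding uj_def Tj_def by (simp add: right_diff_distrib sum_subtractf sum_distrib_left)
    also have "(\<Sum>s<n. P r s * (if s = j then 1 else 0)) = p r"
      using jn by (simp add: p_def if_distrib[of "\<lambda>x. P r _ * x"] sum.delta cong: if_cong)
    also have "(\<Sum>s<n. \<Sum>i<j. P r s * (cf i * T i s)) = (\<Sum>i<j. cf i * u i r)"
      by (subst sum.swap) (auto intro!: sum.cong simp: uT sum_distrib_left mult_ac)
    finally show ?thesis .
  qed
  have orth_j: "ipn n uj (u i') = 0" if "i' < j" for i'
  proof -
    have "ipn n uj (u i') = ipn n p (u i') - (\<Sum>i<j. cf i * ipn n (u i) (u i'))"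
      by (simp add: uj_eq[abs_def] ipn_diff_left ipn_sum_left)
    also have "(\<Sum>i<j. cf i * ipn n (u i) (u i')) = cf i' * ipn n (u i') (u i')"
      using that orth by (subst sum.remove[of _ i']) (auto intro!: sum.neutral)
    also have "\<dots> = ipn n p (u i')" using pos[OF that] by (simp add: cf_def)
    finally show ?thesis by simp
  qed
  have pos_j: "ipn n uj uj > 0"
  proof (rule ccontr)
    assume "\<not> ?thesis"
    hence "ipn n uj uj = 0" using ipn_self_nonneg[of n uj] by linarith
    hence z: "uj r = 0" if "r < n" for r using ipn_self_zero that by blast
    have "(\<Sum>r<n. Q j r * uj r) = (\<Sum>s<n. (\<Sum>r<n. Q j r * P r s) * Tj s)"
      unfolding uj_def by (rule sum_swap_mult)
    also have "\<dots> = (\<Sum>s<n. (if j = s then 1 else 0) * Tj s)"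
      using jn by (intro sum.cong) (auto simp: QP)
    also have "\<dots> = (\<Sum>s<n. if j = s then Tj s else 0)" by (intro sum.cong) auto
    also have "\<dots> = 1" using jn Tjj by (simp add: sum.delta)
    finally show False using z by simp
  qed
  have eig_j: "mv n L uj r = e j * uj r" if rn: "r < n" for r
  proof -
    define c where "c t = (if t < n then (\<Sum>s<n. B t s * Tj s) - e j * Tj t else 0)" for t
    have mvr: "mv n L uj r' = e j * uj r' + (\<Sum>t<n. P r' t * c t)" if "r' < n" for r'
    proof -
      have "mv n L uj r' = (\<Sum>s<n. (\<Sum>l<n. L r' l * P l s) * Tj s)"
        unfolding mv_def uj_def by (rule sum_swap_mult)
      also have "\<dots> = (\<Sum>s<n. (\<Sum>t<n. P r' t * B t s) * Tj s)"
        using that by (intro sum.cong) (auto simp: LP)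
      also have "\<dots> = (\<Sum>t<n. P r' t * (\<Sum>s<n. B t s * Tj s))"
        by (rule sum_swap_mult[symmetric])
      also have "\<dots> = (\<Sum>t<n. P r' t * (e j * Tj t + c t))"
        by (intro sum.cong) (auto simp: c_def)
      also have "\<dots> = e j * uj r' + (\<Sum>t<n. P r' t * c t)"
        unfolding uj_def by (simp add: distrib_left sum.distrib sum_distrib_left mult_ac)
      finally show ?thesis .
    qed
    have c0: "c t = 0" if "t \<ge> j" for t
    proof (cases "t < n")
      case tn: True
      have s: "(\<Sum>s<n. B t s * Tj s) = (if t = j then e j else 0)"
      proof -
        have "(\<Sum>s<n. B t s * Tj s) = (\<Sum>s<n. if s = t \<and> t = j then e j else 0)"
        proof (intro sum.cong refl)
          fix s assume "s \<in> {..<n}"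
          show "B t s * Tj s = (if s = t \<and> t = j then e j else 0)"
          proof (cases "s < t")
            case True thus ?thesis using up[OF tn True] by simp
          next
            case False
            show ?thesis
            proof (cases "s > j")
              case True thus ?thesis using Tj0 by auto
            next
              case False
              with \<open>\<not> s < t\<close> that have "s = t" "t = j" by auto
              thus ?thesis using Tjj dg tn by simp
            qed
          qed
        qed
        also have "\<dots> = (if t = j then e j else 0)" using tn by (auto simp: sum.delta)
        finally show ?thesis .
      qed
      show ?thesis
      proof (cases "t = j")
        case True thus ?thesis using s tn Tjj by (simp add: c_def)
      next
        case False thus ?thesis using s tn Tj0 that by (simp add: c_def)
      qed
    qed (simp add: c_def)
    obtain a where a: "\<And>s. c s = (\<Sum>i<j. a i * T i s)"
      using tri_span[of j T c] T1 T0 c0 by blast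
    define w where "w r' = mv n L uj r' - e j * uj r'" for r'
    have w_eq: "w r' = (\<Sum>i<j. a i * u i r')" if "r' < n" for r'
    proof -
      have "w r' = (\<Sum>t<n. P r' t * c t)" using mvr[OF that] by (simp add: w_def)
      also have "\<dots> = (\<Sum>t<n. P r' t * (\<Sum>i<j. T i t * a i))"
        by (simp add: a mult.commute)
      also have "\<dots> = (\<Sum>i<j. (\<Sum>t<n. P r' t * T i t) * a i)"
        by (rule sum_swap_mult)
      also have "\<dots> = (\<Sum>i<j. a i * u i r')"
        by (intro sum.cong refl) (simp add: uT mult.commute)
      finally show ?thesis .
    qed
    have w_orth: "ipn n w (u i) = 0" if "i < j" for i
    proof -
      have "ipn n w (u i) = ipn n (mv n L uj) (u i) - e j * ipn n uj (u i)"
        unfolding w_def by (simp add: ipn_diff_left ipn_scale_left)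
      also have "ipn n (mv n L uj) (u i) = ipn n uj (mv n L (u i))" by (rule mv_sym[OF sym])
      also have "\<dots> = ipn n uj (\<lambda>r. e i * u i r)"
        unfolding ipn_def using eig that by (auto intro!: sum.cong)
      also have "\<dots> = e i * ipn n uj (u i)" by (subst ipn_sym, simp add: ipn_scale_left ipn_sym)
      finally show ?thesis using orth_j[OF that] by simp
    qed
    have "ipn n w w = ipn n (\<lambda>r. \<Sum>i<j. a i * u i r) w"
      by (rule ipn_cong) (simp add: w_eq)
    also have "\<dots> = 0" by (simp add: ipn_sum_left ipn_sym[of n _ w] w_orth)
    finally have "w r = 0" using ipn_self_zero rn by blast
    thus ?thesis by (simp add: w_def)
  qed
  have A: "\<forall>i<Suc j. T' i i = 1 \<and> (\<forall>s>i. T' i s = 0)"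
    using T1 Tjj T0 Tj0 by (auto simp: T'_def less_Suc_eq)
  have B: "\<forall>i<Suc j. u' i = (\<lambda>r. \<Sum>s<n. P r s * T' i s)"
    using uT by (auto simp: T'_def u'_def uj_def[abs_def] less_Suc_eq)
  have C: "\<forall>i<Suc j. ipn n (u' i) (u' i) > 0"
    using pos pos_j by (auto simp: u'_def less_Suc_eq)
  have D: "\<forall>i<Suc j. \<forall>r<n. mv n L (u' i) r = e i * u' i r"
    using eig eig_j by (auto simp: u'_def less_Suc_eq)
  have E: "\<forall>i<Suc j. \<forall>i'<Suc j. i \<noteq> i' \<longrightarrow> ipn n (u' i) (u' i') = 0"
    using orth orth_j by (auto simp: u'_def less_Suc_eq ipn_sym[of n _ uj])
  have "gs_inv n L P e (Suc j) T' u'"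
    unfolding gs_inv_def using A B C D E by blast
  thus ?thesis by blast
qed


lemma mv_cong: "(\<And>l. l < n \<Longrightarrow> y l = y' l) \<Longrightarrow> mv n L y r = mv n L y' r"
  unfolding mv_def by (auto intro!: sum.cong)

lemma mv_sum: "mv n L (\<lambda>l. \<Sum>i\<in>A. a i * f i l) r = (\<Sum>i\<in>A. a i * mv n L (f i) r)"
  unfolding mv_def by (simp add: sum_distrib_left mult_ac) (rule sum.swap)

lemma spectral_plain:
  fixes L P Q B :: "nat \<Rightarrow> nat \<Rightarrow> real" and e :: "nat \<Rightarrow> real"
  assumes sym: "\<And>i j. i < n \<Longrightarrow> j < n \<Longrightarrow> L i j = L j i"
    and LP: "\<And>i j. i < n \<Longrightarrow> j < n \<Longrightarrow> (\<Sum>l<n. L i l * P l j) = (\<Sum>t<n. P i t * B t j)"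
    and QP: "\<And>i j. i < n \<Longrightarrow> j < n \<Longrightarrow> (\<Sum>l<n. Q i l * P l j) = (if i = j then 1 else 0)"
    and PQ: "\<And>i j. i < n \<Longrightarrow> j < n \<Longrightarrow> (\<Sum>l<n. P i l * Q l j) = (if i = j then 1 else 0)"
    and up: "\<And>t j. t < n \<Longrightarrow> j < t \<Longrightarrow> B t j = 0"
    and dg: "\<And>j. j < n \<Longrightarrow> B j j = e j"
  shows "\<exists>v. (\<forall>i<n. \<forall>i'<n. ipn n (v i) (v i') = (if i = i' then 1 else 0)) \<and>
             (\<forall>y. ipn n y y = (\<Sum>i<n. (ipn n y (v i))^2)) \<and>
             (\<forall>y. ipn n y (mv n L y) = (\<Sum>i<n. e i * (ipn n y (v i))^2))"
proof -
  have "\<forall>j\<le>n. \<exists>T u. gs_inv n L P e j T u"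
  proof (intro allI impI)
    fix j assume "j \<le> n"
    thus "\<exists>T u. gs_inv n L P e j T u"
    proof (induction j)
      case 0 show ?case by (auto simp: gs_inv_def)
    next
      case (Suc j)
      then obtain T u where "gs_inv n L P e j T u" by auto
      thus ?case using gs_step[OF sym LP QP up dg] Suc.prems by auto
    qed
  qed
  then obtain T u where inv: "gs_inv n L P e n T u" by blast
  from inv have T1: "\<And>i. i < n \<Longrightarrow> T i i = 1" and T0: "\<And>i s. i < n \<Longrightarrow> s > i \<Longrightarrow> T i s = 0"
    and uT: "\<And>i. i < n \<Longrightarrow> u i = (\<lambda>r. \<Sum>s<n. P r s * T i s)"
    and orth: "\<And>i i'. i < n \<Longrightarrow> i' < n \<Longrightarrow> i \<noteq> i' \<Longrightarrow> ipn n (u i) (u i') = 0"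
    and pos: "\<And>i. i < n \<Longrightarrow> ipn n (u i) (u i) > 0"
    and eig: "\<And>i r. i < n \<Longrightarrow> r < n \<Longrightarrow> mv n L (u i) r = e i * u i r"
    unfolding gs_inv_def by auto
  define N where "N i = ipn n (u i) (u i)" for i
  have complete: "\<exists>a. \<forall>r<n. y r = (\<Sum>i<n. a i * u i r)" for y
  proof -
    define c where "c s = (if s < n then (\<Sum>r<n. Q s r * y r) else 0)" for s
    obtain a where a: "\<And>s. c s = (\<Sum>i<n. a i * T i s)"
      using tri_span[of n T c] T1 T0 by (force simp: c_def)
    have "y r = (\<Sum>i<n. a i * u i r)" if r: "r < n" for r
    proof -
      have "(\<Sum>s<n. P r s * c s) = (\<Sum>s<n. P r s * (\<Sum>r'<n. Q s r' * y r'))"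
        by (intro sum.cong) (auto simp: c_def)
      also have "\<dots> = (\<Sum>r'<n. (\<Sum>s<n. P r s * Q s r') * y r')" by (rule sum_swap_mult)
      also have "\<dots> = (\<Sum>r'<n. if r = r' then y r' else 0)"
        using r by (intro sum.cong) (auto simp: PQ)
      also have "\<dots> = y r" using r by simp
      finally have 1: "(\<Sum>s<n. P r s * c s) = y r" .
      have "(\<Sum>s<n. P r s * c s) = (\<Sum>s<n. P r s * (\<Sum>i<n. T i s * a i))"
        by (simp add: a mult.commute)
      also have "\<dots> = (\<Sum>i<n. (\<Sum>s<n. P r s * T i s) * a i)" by (rule sum_swap_mult)
      also have "\<dots> = (\<Sum>i<n. a i * u i r)" by (intro sum.cong refl) (simp add: uT mult.commute)
      finally show ?thesis using 1 by simp
    qed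
    thus ?thesis by blast
  qed
  have coef: "ipn n y (u i) = a i * N i"
    if a: "\<forall>r<n. y r = (\<Sum>i<n. a i * u i r)" and i: "i < n" for y a i
  proof -
    have "ipn n y (u i) = ipn n (\<lambda>r. \<Sum>i<n. a i * u i r) (u i)" by (rule ipn_cong) (use a in auto)
    also have "\<dots> = (\<Sum>i'<n. a i' * ipn n (u i') (u i))" by (rule ipn_sum_left)
    also have "\<dots> = a i * N i"
      using i orth by (subst sum.remove[of _ i]) (auto intro!: sum.neutral simp: N_def)
    finally show ?thesis .
  qed
  define v where "v i = (\<lambda>r. u i r / sqrt (N i))" for i
  have Npos: "\<And>i. i < n \<Longrightarrow> N i > 0" using pos by (simp add: N_def)
  have vv: "ipn n (v i) (v i') = (if i = i' then 1 else 0)" if "i < n" "i' < n" for i i'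
  proof -
    have "ipn n (v i) (v i') = ipn n (u i) (u i') / (sqrt (N i) * sqrt (N i'))"
      unfolding v_def ipn_def by (simp add: sum_divide_distrib)
    thus ?thesis using that orth Npos[of i] by (auto simp: N_def)
  qed
  have yv: "ipn n y (v i) = ipn n y (u i) / sqrt (N i)" for y i
    unfolding v_def ipn_def by (simp add: sum_divide_distrib)
  have S1: "ipn n y y = (\<Sum>i<n. (ipn n y (v i))^2)" for y
  proof -
    obtain a where a: "\<forall>r<n. y r = (\<Sum>i<n. a i * u i r)" using complete by blast
    have "ipn n y y = ipn n (\<lambda>r. \<Sum>i<n. a i * u i r) y" by (rule ipn_cong) (use a in auto)
    also have "\<dots> = (\<Sum>i<n. a i * ipn n (u i) y)" by (rule ipn_sum_left)
    also have "\<dots> = (\<Sum>i<n. (ipn n y (v i))^2)"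
    proof (intro sum.cong refl)
      fix i assume "i \<in> {..<n}"
      hence i: "i < n" by simp
      show "a i * ipn n (u i) y = (ipn n y (v i))^2"
        using coef[OF a i] Npos[OF i] by (simp add: yv ipn_sym[of n _ y] power_divide power2_eq_square)
    qed
    finally show ?thesis .
  qed
  have S2: "ipn n y (mv n L y) = (\<Sum>i<n. e i * (ipn n y (v i))^2)" for y
  proof -
    obtain a where a: "\<forall>r<n. y r = (\<Sum>i<n. a i * u i r)" using complete by blast
    have "ipn n y (mv n L y) = ipn n (mv n L y) y" by (rule ipn_sym)
    also have "\<dots> = ipn n (\<lambda>r. \<Sum>i<n. (a i * e i) * u i r) y"
    proof (rule ipn_cong)
      fix r assume r: "r < n"
      have "mv n L y r = mv n L (\<lambda>l. \<Sum>i<n. a i * u i l) r" by (rule mv_cong) (use a in auto)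
      also have "\<dots> = (\<Sum>i<n. a i * mv n L (u i) r)" by (rule mv_sum)
      also have "\<dots> = (\<Sum>i<n. (a i * e i) * u i r)" using eig r by (auto intro!: sum.cong)
      finally show "mv n L y r = (\<Sum>i<n. (a i * e i) * u i r)" .
    qed
    also have "\<dots> = (\<Sum>i<n. (a i * e i) * ipn n (u i) y)" by (rule ipn_sum_left)
    also have "\<dots> = (\<Sum>i<n. e i * (ipn n y (v i))^2)"
    proof (intro sum.cong refl)
      fix i assume "i \<in> {..<n}"
      hence i: "i < n" by simp
      show "(a i * e i) * ipn n (u i) y = e i * (ipn n y (v i))^2"
        using coef[OF a i] Npos[OF i] by (simp add: yv ipn_sym[of n _ y] power_divide power2_eq_square)
    qed
    finally show ?thesis .
  qed
  show ?thesis using vv S1 S2 by blast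
qed



lemma rearr:
  fixes e p :: "nat \<Rightarrow> real"
  assumes k1: "k \<ge> 1" and kn: "k \<le> n" and mono: "\<And>i j. i \<le> j \<Longrightarrow> j < n \<Longrightarrow> e i \<le> e j"
    and p0: "\<And>j. j < n \<Longrightarrow> 0 \<le> p j" and p1: "\<And>j. j < n \<Longrightarrow> p j \<le> 1"
    and ps: "(\<Sum>j<n. p j) = real k"
  shows "(\<Sum>j<k. e j) \<le> (\<Sum>j<n. e j * p j)"
proof -
  define t where "t = e (k - 1)"
  define q where "q j = (if j < k then 1 else (0::real))" for j
  have "0 \<le> (\<Sum>j<n. (e j - t) * (p j - q j))"
  proof (rule sum_nonneg)
    fix j assume j: "j \<in> {..<n}"
    show "0 \<le> (e j - t) * (p j - q j)"
    proof (cases "j < k")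
      case True
      have "e j \<le> t" unfolding t_def using True kn by (intro mono) auto
      moreover have "p j \<le> 1" using p1 j by auto
      ultimately show ?thesis using True by (simp add: q_def mult_nonpos_nonpos)
    next
      case False
      have "t \<le> e j" unfolding t_def using False j k1 by (intro mono) auto
      thus ?thesis using False p0 j by (simp add: q_def)
    qed
  qed
  also have "(\<Sum>j<n. (e j - t) * (p j - q j)) =
      (\<Sum>j<n. e j * p j) - (\<Sum>j<n. e j * q j) - t * (\<Sum>j<n. p j) + t * (\<Sum>j<n. q j)"
    by (simp add: algebra_simps sum_subtractf sum.distrib sum_distrib_left)
  also have "(\<Sum>j<n. e j * q j) = (\<Sum>j<k. e j)"
  proof -
    have "(\<Sum>j<n. e j * q j) = (\<Sum>j<k. e j * q j)"
      by (rule sum.mono_neutral_right) (use kn in \<open>auto simp: q_def\<close>)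
    thus ?thesis by (simp add: q_def)
  qed
  also have "(\<Sum>j<n. q j) = real k"
  proof -
    have "(\<Sum>j<n. q j) = (\<Sum>j<k. q j)"
      by (rule sum.mono_neutral_right) (use kn in \<open>auto simp: q_def\<close>)
    thus ?thesis by (simp add: q_def)
  qed
  finally show ?thesis using ps by simp
qed

lemma var_le:
  fixes d f :: "nat \<Rightarrow> real"
  assumes fin: "finite S" and V: "(\<Sum>i\<in>S. d i) > 0"
  shows "(\<Sum>i\<in>S. d i * (f i)^2) - (\<Sum>i\<in>S. d i * f i)^2 / (\<Sum>i\<in>S. d i) \<le> (\<Sum>i\<in>S. d i * (f i - t)^2)"
proof -
  define V where "V = (\<Sum>i\<in>S. d i)"
  define X where "X = (\<Sum>i\<in>S. d i * f i)"
  define Y where "Y = (\<Sum>i\<in>S. d i * (f i)^2)"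
  have "(\<Sum>i\<in>S. d i * (f i - t)^2) = (\<Sum>i\<in>S. d i * (f i)^2 - 2 * t * (d i * f i) + t^2 * d i)"
    by (intro sum.cong) (auto simp: power2_eq_square algebra_simps)
  also have "\<dots> = Y - 2 * t * X + t^2 * V"
    by (simp add: sum.distrib sum_subtractf sum_distrib_left X_def Y_def V_def)
  finally have e: "(\<Sum>i\<in>S. d i * (f i - t)^2) = Y - 2 * t * X + t^2 * V" .
  have Vp: "V > 0" using V by (simp add: V_def)
  have "Y - X^2 / V \<le> Y - 2 * t * X + t^2 * V"
  proof -
    have "0 \<le> (X - t * V)^2 / V" using Vp by simp
    also have "(X - t * V)^2 / V = X^2 / V - 2 * t * X + t^2 * V"
      using Vp by (simp add: field_simps power2_eq_square)
    finally show ?thesis by simp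
  qed
  thus ?thesis using e by (simp add: X_def Y_def V_def)
qed

lemma grow_alg:
  fixes \<gamma> r u v E :: real
  assumes g: "\<gamma> > 0" and r: "r \<ge> 1" and hv: "\<gamma> * v^2 \<le> (r - 1) * E" and E: "E \<ge> 0"
    and r1: "r = 1 \<Longrightarrow> v = 0"
  shows "\<gamma> * (u + v)^2 \<le> r * (\<gamma> * u^2) + r * E"
proof (cases "r = 1")
  case True thus ?thesis using r1 E by simp
next
  case False
  hence r': "r - 1 > 0" using r by simp
  have "r * (\<gamma> * v^2) \<le> r * ((r - 1) * E)" using hv r by (intro mult_left_mono) auto
  hence hE: "r * \<gamma> * v^2 / (r - 1) \<le> r * E" using r' by (simp add: field_simps)
  have "0 \<le> \<gamma> * ((r - 1) * u - v)^2 / (r - 1)" using g r' by simp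
  also have "\<gamma> * ((r - 1) * u - v)^2 / (r - 1) = r * (\<gamma> * u^2) + r * \<gamma> * v^2 / (r - 1) - \<gamma> * (u + v)^2"
    using r' by (simp add: field_simps power2_eq_square)
  finally show ?thesis using hE by linarith
qed

definition Eg :: "(nat \<Rightarrow> nat \<Rightarrow> real) \<Rightarrow> (nat \<Rightarrow> real) \<Rightarrow> nat set \<Rightarrow> real" where
  "Eg A f R = (\<Sum>a\<in>R. \<Sum>b\<in>R. A a b * (f a - f b)^2)"

lemma Eg_nonneg: "(\<And>a b. a \<in> R \<Longrightarrow> b \<in> R \<Longrightarrow> A a b \<ge> 0) \<Longrightarrow> Eg A f R \<ge> 0"
  unfolding Eg_def by (auto intro!: sum_nonneg)

lemma Eg_mono:
  assumes "finite S" "R \<subseteq> S" "\<And>a b. a \<in> S \<Longrightarrow> b \<in> S \<Longrightarrow> A a b \<ge> 0"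
  shows "Eg A f R \<le> Eg A f S"
proof -
  have "Eg A f R \<le> (\<Sum>a\<in>R. \<Sum>b\<in>S. A a b * (f a - f b)^2)"
    unfolding Eg_def using assms by (intro sum_mono sum_mono2) (auto intro: finite_subset)
  also have "\<dots> \<le> Eg A f S"
    unfolding Eg_def using assms by (intro sum_mono2) (auto intro!: sum_nonneg)
  finally show ?thesis .
qed

lemma Eg_insert:
  assumes fin: "finite R" and b: "b \<notin> R" and a: "a \<in> R"
    and nn: "\<And>x y. x \<in> insert b R \<Longrightarrow> y \<in> insert b R \<Longrightarrow> A x y \<ge> 0"
  shows "Eg A f R + A a b * (f a - f b)^2 \<le> Eg A f (insert b R)"
proof -
  have "Eg A f (insert b R) = (\<Sum>y\<in>insert b R. A b y * (f b - f y)^2) +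
      (\<Sum>x\<in>R. A x b * (f x - f b)^2 + (\<Sum>y\<in>R. A x y * (f x - f y)^2))"
    unfolding Eg_def using fin b by (simp add: sum.insert)
  also have "\<dots> = (\<Sum>y\<in>insert b R. A b y * (f b - f y)^2) + (\<Sum>x\<in>R. A x b * (f x - f b)^2) + Eg A f R"
    unfolding Eg_def by (simp add: sum.distrib)
  finally have eq: "Eg A f (insert b R) = (\<Sum>y\<in>insert b R. A b y * (f b - f y)^2) + (\<Sum>x\<in>R. A x b * (f x - f b)^2) + Eg A f R" .
  have 1: "0 \<le> (\<Sum>y\<in>insert b R. A b y * (f b - f y)^2)" using nn by (auto intro!: sum_nonneg)
  have 2: "A a b * (f a - f b)^2 \<le> (\<Sum>x\<in>R. A x b * (f x - f b)^2)"
    using fin a nn by (intro member_le_sum) auto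
  show ?thesis using eq 1 2 by linarith
qed

lemma growth:
  fixes A :: "nat \<Rightarrow> nat \<Rightarrow> real" and f :: "nat \<Rightarrow> real"
  assumes fin: "finite S" and i0: "i0 \<in> S" and g: "\<gamma> > 0"
    and nn: "\<And>a b. a \<in> S \<Longrightarrow> b \<in> S \<Longrightarrow> A a b \<ge> 0"
    and conn: "\<And>R. R \<subseteq> S \<Longrightarrow> R \<noteq> {} \<Longrightarrow> R \<noteq> S \<Longrightarrow> \<exists>a\<in>R. \<exists>b\<in>S - R. A a b \<ge> \<gamma>"
  shows "\<forall>i\<in>S. \<gamma> * (f i - f i0)^2 \<le> (real (card S) - 1) * Eg A f S"
proof -
  have main: "\<forall>j. j < card S \<longrightarrow> (\<exists>R. R \<subseteq> S \<and> i0 \<in> R \<and> card R = Suc j \<and>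
       (\<forall>i\<in>R. \<gamma> * (f i - f i0)^2 \<le> (real (card R) - 1) * Eg A f R))"
  proof (intro allI)
    fix j show "j < card S \<longrightarrow> (\<exists>R. R \<subseteq> S \<and> i0 \<in> R \<and> card R = Suc j \<and>
       (\<forall>i\<in>R. \<gamma> * (f i - f i0)^2 \<le> (real (card R) - 1) * Eg A f R))"
    proof (induction j)
      case 0
      show ?case using i0 by (intro impI exI[of _ "{i0}"]) auto
    next
      case (Suc j)
      show ?case
      proof
        assume j: "Suc j < card S"
        then obtain R where R: "R \<subseteq> S" "i0 \<in> R" "card R = Suc j"
          and IH: "\<And>i. i \<in> R \<Longrightarrow> \<gamma> * (f i - f i0)^2 \<le> (real (card R) - 1) * Eg A f R"
          using Suc.IH by auto
        have finR: "finite R" using R fin finite_subset by blast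
        have "R \<noteq> S" using R j by auto
        moreover have "R \<noteq> {}" using R by auto
        ultimately obtain a b where a: "a \<in> R" and b: "b \<in> S - R" and ab: "A a b \<ge> \<gamma>"
          using conn R by blast
        define R' where "R' = insert b R"
        have R'S: "R' \<subseteq> S" using R b by (auto simp: R'_def)
        have cR': "card R' = Suc (card R)" using b finR by (simp add: R'_def)
        have nnR': "\<And>x y. x \<in> R' \<Longrightarrow> y \<in> R' \<Longrightarrow> A x y \<ge> 0" using nn R'S by auto
        have ER: "Eg A f R \<ge> 0" using nn R by (intro Eg_nonneg) auto
        have EmR: "Eg A f R \<le> Eg A f R'"
          using nnR' by (intro Eg_mono) (auto simp: R'_def finR)
        have Eins: "Eg A f R + A a b * (f a - f b)^2 \<le> Eg A f R'"
          unfolding R'_def using finR b a nnR' by (intro Eg_insert) (auto simp: R'_def)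
        have goal: "\<gamma> * (f i - f i0)^2 \<le> (real (card R') - 1) * Eg A f R'" if i: "i \<in> R'" for i
        proof (cases "i = b")
          case True
          define r where "r = real (card R)"
          have r1: "r \<ge> 1" using R by (simp add: r_def)
          have hv: "\<gamma> * (f a - f i0)^2 \<le> (r - 1) * Eg A f R" using IH[OF a] by (simp add: r_def)
          have rv: "r = 1 \<Longrightarrow> f a - f i0 = 0"
          proof -
            assume "r = 1"
            hence "card R = 1" by (simp add: r_def)
            then obtain z where "R = {z}" by (rule card_1_singletonE)
            thus "f a - f i0 = 0" using a R(2) by simp
          qed
          have "\<gamma> * ((f b - f a) + (f a - f i0))^2 \<le> r * (\<gamma> * (f b - f a)^2) + r * Eg A f R"
            by (rule grow_alg[OF g r1 hv ER rv])
          also have "\<dots> \<le> r * (A a b * (f a - f b)^2) + r * Eg A f R"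
          proof -
            have "\<gamma> * (f b - f a)^2 \<le> A a b * (f a - f b)^2"
              using ab by (simp add: power2_commute mult_right_mono)
            thus ?thesis using r1 by (simp add: mult_left_mono)
          qed
          also have "\<dots> \<le> r * Eg A f R'" using Eins r1 by (simp add: distrib_left[symmetric] mult_left_mono)
          finally show ?thesis using True cR' by (simp add: r_def)
        next
          case False
          hence iR: "i \<in> R" using i by (simp add: R'_def)
          have "\<gamma> * (f i - f i0)^2 \<le> (real (card R) - 1) * Eg A f R" by (rule IH[OF iR])
          also have "\<dots> \<le> (real (card R') - 1) * Eg A f R'"
            using cR' R EmR ER by (intro mult_mono) auto
          finally show ?thesis .
        qed
        show "\<exists>R. R \<subseteq> S \<and> i0 \<in> R \<and> card R = Suc (Suc j) \<and>
              (\<forall>i\<in>R. \<gamma> * (f i - f i0)^2 \<le> (real (card R) - 1) * Eg A f R)"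
          using R'S R cR' goal by (intro exI[of _ R']) (auto simp: R'_def)
      qed
    qed
  qed
  have cS: "card S > 0" using fin i0 card_gt_0_iff by blast
  then obtain R where R: "R \<subseteq> S" "card R = card S"
    and H: "\<forall>i\<in>R. \<gamma> * (f i - f i0)^2 \<le> (real (card R) - 1) * Eg A f R"
    using main[rule_format, of "card S - 1"] by auto
  have "R = S" using R fin card_subset_eq by blast
  thus ?thesis using H by simp
qed



lemma cluster_poincare:
  fixes A :: "nat \<Rightarrow> nat \<Rightarrow> real" and d f :: "nat \<Rightarrow> real"
  assumes fin: "finite S" and ne: "S \<noteq> {}" and cS: "card S \<le> n" and g: "\<gamma> > 0"
    and dpos: "\<And>i. i \<in> S \<Longrightarrow> d i > 0" and dle: "\<And>i. i \<in> S \<Longrightarrow> d i \<le> n"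
    and nn: "\<And>a b. a \<in> S \<Longrightarrow> b \<in> S \<Longrightarrow> A a b \<ge> 0"
    and conn: "\<And>R. R \<subseteq> S \<Longrightarrow> R \<noteq> {} \<Longrightarrow> R \<noteq> S \<Longrightarrow> \<exists>a\<in>R. \<exists>b\<in>S - R. A a b \<ge> \<gamma>"
  shows "\<gamma> * ((\<Sum>i\<in>S. d i * (f i)^2) - (\<Sum>i\<in>S. d i * f i)^2 / (\<Sum>i\<in>S. d i)) \<le> real n ^ 3 * Eg A f S"
proof -
  obtain i0 where i0: "i0 \<in> S" using ne by blast
  have V: "(\<Sum>i\<in>S. d i) > 0" using fin ne dpos by (intro sum_pos) auto
  have G: "\<forall>i\<in>S. \<gamma> * (f i - f i0)^2 \<le> (real (card S) - 1) * Eg A f S"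
    by (rule growth[OF fin i0 g nn conn])
  have E0: "Eg A f S \<ge> 0" using nn by (intro Eg_nonneg) auto
  have "\<gamma> * ((\<Sum>i\<in>S. d i * (f i)^2) - (\<Sum>i\<in>S. d i * f i)^2 / (\<Sum>i\<in>S. d i))
        \<le> \<gamma> * (\<Sum>i\<in>S. d i * (f i - f i0)^2)"
    using var_le[OF fin V, of f "f i0"] g by (intro mult_left_mono) auto
  also have "\<dots> = (\<Sum>i\<in>S. d i * (\<gamma> * (f i - f i0)^2))" by (simp add: sum_distrib_left mult_ac)
  also have "\<dots> \<le> (\<Sum>i\<in>S. real n * ((real (card S) - 1) * Eg A f S))"
  proof (intro sum_mono)
    fix i assume i: "i \<in> S"
    have z: "0 \<le> \<gamma> * (f i - f i0)^2" using g by simp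
    have le: "\<gamma> * (f i - f i0)^2 \<le> (real (card S) - 1) * Eg A f S" using G i by blast
    show "d i * (\<gamma> * (f i - f i0)^2) \<le> real n * ((real (card S) - 1) * Eg A f S)"
      by (rule mult_mono[OF dle[OF i] le]) (use z in auto)
  qed
  also have "\<dots> = real (card S) * real n * ((real (card S) - 1) * Eg A f S)" by simp
  also have "\<dots> \<le> real n * real n * (real n * Eg A f S)"
  proof -
    have c1: "real (card S) \<le> real n" using cS by simp
    have c2: "real (card S) - 1 \<le> real n" using cS by simp
    have c3: "real (card S) \<ge> 1" using fin ne by (simp add: Suc_leI card_gt_0_iff)
    show ?thesis using c1 c2 c3 E0 by (intro mult_mono) auto
  qed
  also have "\<dots> = real n ^ 3 * Eg A f S" by (simp add: power3_eq_cube)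
  finally show ?thesis .
qed

lemma QF_formula:
  fixes A :: "nat \<Rightarrow> nat \<Rightarrow> real" and d y :: "nat \<Rightarrow> real"
  assumes sym: "\<And>i j. i < n \<Longrightarrow> j < n \<Longrightarrow> A i j = A j i"
    and deg: "\<And>i. i < n \<Longrightarrow> d i = (\<Sum>j<n. A i j)"
    and dpos: "\<And>i. i < n \<Longrightarrow> d i > 0"
  shows "ipn n y (mv n (\<lambda>i j. (if i = j then 1 else 0) - A i j / (sqrt (d i) * sqrt (d j))) y) =
         (1/2) * (\<Sum>i<n. \<Sum>j<n. A i j * (y i / sqrt (d i) - y j / sqrt (d j))^2)"
proof -
  define f where "f i = y i / sqrt (d i)" for i
  have yf: "y i = sqrt (d i) * f i" if "i < n" for i
    using dpos[OF that] by (simp add: f_def)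
  have "ipn n y (mv n (\<lambda>i j. (if i = j then 1 else 0) - A i j / (sqrt (d i) * sqrt (d j))) y)
      = (\<Sum>i<n. \<Sum>j<n. y i * (((if i = j then 1 else 0) - A i j / (sqrt (d i) * sqrt (d j))) * y j))"
    unfolding ipn_def mv_def by (simp add: sum_distrib_left)
  also have "\<dots> = (\<Sum>i<n. \<Sum>j<n. (if i = j then y i * y j else 0) - A i j * f i * f j)"
    by (intro sum.cong refl) (auto simp: f_def field_simps)
  also have "\<dots> = (\<Sum>i<n. (y i)^2) - (\<Sum>i<n. \<Sum>j<n. A i j * f i * f j)"
    by (simp add: sum_subtractf power2_eq_square)
  finally have L: "ipn n y (mv n (\<lambda>i j. (if i = j then 1 else 0) - A i j / (sqrt (d i) * sqrt (d j))) y)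
      = (\<Sum>i<n. (y i)^2) - (\<Sum>i<n. \<Sum>j<n. A i j * f i * f j)" .
  have sq: "(\<Sum>i<n. (y i)^2) = (\<Sum>i<n. \<Sum>j<n. A i j * (f i)^2)"
  proof (intro sum.cong refl)
    fix i assume "i \<in> {..<n}"
    hence i: "i < n" by simp
    have "(y i)^2 = d i * (f i)^2" using yf[OF i] dpos[OF i] by (simp add: power_mult_distrib)
    also have "\<dots> = (\<Sum>j<n. A i j * (f i)^2)" by (simp add: deg[OF i] sum_distrib_right)
    finally show "(y i)^2 = (\<Sum>j<n. A i j * (f i)^2)" .
  qed
  have sq2: "(\<Sum>i<n. \<Sum>j<n. A i j * (f j)^2) = (\<Sum>i<n. \<Sum>j<n. A i j * (f i)^2)"
    by (subst sum.swap) (auto intro!: sum.cong simp: sym)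
  have "(\<Sum>i<n. \<Sum>j<n. A i j * (f i - f j)^2) =
        (\<Sum>i<n. \<Sum>j<n. A i j * (f i)^2) + (\<Sum>i<n. \<Sum>j<n. A i j * (f j)^2) - 2 * (\<Sum>i<n. \<Sum>j<n. A i j * f i * f j)"
    by (simp add: power2_diff algebra_simps sum.distrib sum_subtractf sum_distrib_left)
  thus ?thesis using L sq sq2 by (simp add: f_def)
qed



lemma set_dist_nonneg: "set_dist S U \<ge> 0"
  unfolding set_dist_def by (rule INF_greatest) simp

lemma set_dist_le: "a \<in> S \<Longrightarrow> b \<in> U \<Longrightarrow> set_dist S U \<le> ereal (norm (a - b))"
  unfolding set_dist_def by (rule INF_lower2[of "(a,b)"]) auto

lemma set_dist_attained:
  assumes "finite S" "finite U" "S \<noteq> {}" "U \<noteq> {}"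
  shows "\<exists>a\<in>S. \<exists>b\<in>U. set_dist S U = ereal (norm (a - b))"
proof -
  define g where "g p = ereal (norm (fst p - snd p))" for p :: "'a \<times> 'a"
  have fin: "finite (g ` (S \<times> U))" "g ` (S \<times> U) \<noteq> {}" using assms by auto
  have "set_dist S U = Inf (g ` (S \<times> U))" unfolding set_dist_def g_def by simp
  also have "\<dots> = Min (g ` (S \<times> U))" by (rule cInf_eq_Min[OF fin])
  finally have "set_dist S U \<in> g ` (S \<times> U)" using Min_in[OF fin] by simp
  thus ?thesis by (auto simp: g_def) blast
qed

lemma sum_if_subset: fixes n :: nat shows "S \<subseteq> {..<n} \<Longrightarrow> (\<Sum>i<n. if i \<in> S then h i else 0) = (\<Sum>i\<in>S. (h i :: real))"
  by (subst sum.inter_restrict[symmetric]) (auto simp: Int_absorb1 Int_absorb2)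



theorem lemma10:
  fixes K :: "real \<Rightarrow> real" and \<sigma> :: real and n k :: nat
    and x :: "nat \<Rightarrow> 'a::euclidean_space" and C :: "nat \<Rightarrow> 'a set"
    and \<delta> :: "nat \<Rightarrow> real" and e :: "real list"
  assumes Kpos: "\<And>t. t \<ge> 0 \<Longrightarrow> K t > 0"
    and Kmono: "\<And>s t. 0 \<le> s \<Longrightarrow> s \<le> t \<Longrightarrow> K t \<le> K s"
    and K0: "K 0 = 1"
    and sigma: "\<sigma> > 0"
    and inj: "inj_on x {..<n}"
    and nk: "n \<ge> k + 1"
    and Cne: "\<And>l. l \<in> {1..k} \<Longrightarrow> C l \<noteq> {}"
    and Cdisj: "\<And>l m. l \<in> {1..k} \<Longrightarrow> m \<in> {1..k} \<Longrightarrow> l \<noteq> m \<Longrightarrow> C l \<inter> C m = {}"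
    and Cunion: "(\<Union>l\<in>{1..k}. C l) = x ` {..<n}"
    and delta_nonneg: "\<And>l. l \<in> {1..k} \<Longrightarrow> \<delta> l \<ge> 0"
    and Cconn: "\<And>l. l \<in> {1..k} \<Longrightarrow> connected_at_dist (C l) (\<delta> l)"
    and eig: "sorted_eigenvalues (norm_laplacian K \<sigma> n x) e"
  shows "(\<Sum>l<k. e ! l) \<le> real n * real k *
           (MAX m\<in>{1..k}. Ksig K \<sigma> (set_dist (C m) (x ` {..<n} - C m))) \<and>
         e ! k \<ge> (MIN (l, m)\<in>{1..k} \<times> {1..k}.
           K (\<delta> l / \<sigma>) / (9 * real n ^ 3 * (real k + 1) ^ 4)
           - real n ^ 3 * real k * Ksig K \<sigma> (set_dist (C m) (x ` {..<n} - C m)))"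
proof -
  have k1: "k \<ge> 1"
  proof (rule ccontr)
    assume "\<not> k \<ge> 1"
    hence "k = 0" by simp
    hence "x ` {..<n} = {}" using Cunion by simp
    moreover have "0 \<in> {..<n}" using nk by simp
    ultimately show False by blast
  qed
  have kn: "k < n" using nk by simp
  define A where "A i j = K (norm (x i - x j) / \<sigma>)" for i j
  define d where "d i = (\<Sum>j<n. A i j)" for i
  define Lf where "Lf i j = (if i = j then 1 else 0) - A i j / (sqrt (d i) * sqrt (d j))" for i j
  have Apos: "A i j > 0" for i j unfolding A_def using sigma by (intro Kpos) simp
  have Ale1: "A i j \<le> 1" for i j unfolding A_def using sigma K0 Kmono[of 0 "norm (x i - x j) / \<sigma>"] by simp
  have Aii: "A i i = 1" for i unfolding A_def using K0 by simp
  have Asym: "A i j = A j i" for i j unfolding A_def by (simp add: norm_minus_commute)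
  have dge1: "d i \<ge> 1" if "i < n" for i
  proof -
    have "A i i \<le> d i" unfolding d_def using that Apos by (intro member_le_sum) (auto intro: less_imp_le)
    thus ?thesis using Aii by simp
  qed
  have dpos: "d i > 0" if "i < n" for i using dge1[OF that] by simp
  have dle: "d i \<le> real n" for i
  proof -
    have "d i \<le> (\<Sum>j<n. 1)" unfolding d_def using Ale1 by (intro sum_mono) auto
    thus ?thesis by simp
  qed
  define Lm where "Lm = norm_laplacian K \<sigma> n x"
  have Lc: "Lm \<in> carrier_mat n n" unfolding Lm_def norm_laplacian_def carrier_mat_def by simp
  have aff: "affinity K \<sigma> n x $$ (i,j) = A i j" if "i < n" "j < n" for i j
    using that unfolding affinity_def A_def by simp
  have degeq: "degree K \<sigma> n x i = d i" if "i < n" for i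
    using that unfolding degree_def d_def by (simp add: aff)
  have Lent: "Lm $$ (i,j) = Lf i j" if "i < n" "j < n" for i j
    using that unfolding Lm_def norm_laplacian_def Lf_def by (simp add: aff degeq)
  from eig have sorted_e: "sorted e" and len_e: "length e = n"
    and cp: "char_poly Lm = (\<Prod>a\<leftarrow>e. [:- a, 1:])"
    unfolding sorted_eigenvalues_def Lm_def[symmetric] using Lc by auto
  obtain B P Q where sd: "schur_decomposition Lm e = (B, P, Q)" by (cases "schur_decomposition Lm e") auto
  from schur_decomposition[OF Lc cp sd]
  have sim: "similar_mat_wit Lm B P Q" and ut: "upper_triangular B" and dB: "diag_mat B = e" by auto
  have Bc: "B \<in> carrier_mat n n" using sim Lc unfolding similar_mat_wit_def Let_def by auto
  note ef = mat_entry_facts[OF sim Lc]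
  obtain v where ON: "\<forall>i<n. \<forall>i'<n. ipn n (v i) (v i') = (if i = i' then 1 else 0)"
    and SP1: "\<forall>y. ipn n y y = (\<Sum>i<n. (ipn n y (v i))^2)"
    and SP2: "\<forall>y. ipn n y (mv n (\<lambda>i j. Lm $$ (i,j)) y) = (\<Sum>i<n. (e ! i) * (ipn n y (v i))^2)"
  proof -
    have "\<exists>v. (\<forall>i<n. \<forall>i'<n. ipn n (v i) (v i') = (if i = i' then 1 else 0)) \<and>
             (\<forall>y. ipn n y y = (\<Sum>i<n. (ipn n y (v i))^2)) \<and>
             (\<forall>y. ipn n y (mv n (\<lambda>i j. Lm $$ (i,j)) y) = (\<Sum>i<n. (e ! i) * (ipn n y (v i))^2))"
    proof (rule spectral_plain[where P = "\<lambda>i j. P $$ (i,j)" and Q = "\<lambda>i j. Q $$ (i,j)" and B = "\<lambda>i j. B $$ (i,j)"])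
      show "Lm $$ (i,j) = Lm $$ (j,i)" if "i < n" "j < n" for i j
        using that by (simp add: Lent Lf_def Asym mult.commute)
      show "(\<Sum>l<n. Lm $$ (i,l) * P $$ (l,j)) = (\<Sum>t<n. P $$ (i,t) * B $$ (t,j))" if "i < n" "j < n" for i j
        using ef(1)[OF that] .
      show "(\<Sum>l<n. Q $$ (i,l) * P $$ (l,j)) = (if i = j then 1 else 0)" if "i < n" "j < n" for i j
        using ef(2)[OF that] .
      show "(\<Sum>l<n. P $$ (i,l) * Q $$ (l,j)) = (if i = j then 1 else 0)" if "i < n" "j < n" for i j
        using ef(3)[OF that] .
      show "B $$ (t,j) = 0" if "t < n" "j < t" for t j
        using ut that Bc unfolding upper_triangular_def by auto
      show "B $$ (j,j) = e ! j" if "j < n" for j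
        using that Bc dB[symmetric] unfolding diag_mat_def by simp
    qed
    thus ?thesis using that by blast
  qed
  define QF where "QF y = ipn n y (mv n Lf y)" for y
  have QF_spec: "QF y = (\<Sum>i<n. (e ! i) * (ipn n y (v i))^2)" for y
  proof -
    have "QF y = ipn n y (mv n (\<lambda>i j. Lm $$ (i,j)) y)"
      unfolding QF_def ipn_def mv_def by (intro sum.cong refl) (auto simp: Lent intro!: sum.cong)
    thus ?thesis using SP2 by simp
  qed
  have QF_form: "QF y = (1/2) * (\<Sum>i<n. \<Sum>j<n. A i j * (y i / sqrt (d i) - y j / sqrt (d j))^2)" for y
    unfolding QF_def Lf_def[abs_def]
  proof (rule QF_formula)
    show "\<And>i j. i < n \<Longrightarrow> j < n \<Longrightarrow> A i j = A j i" using Asym by blast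
    show "\<And>i. i < n \<Longrightarrow> d i = (\<Sum>j<n. A i j)" by (simp add: d_def)
    show "\<And>i. i < n \<Longrightarrow> d i > 0" using dpos by blast
  qed
  define I where "I m = {i. i < n \<and> x i \<in> C m}" for m
  have Isub: "I m \<subseteq> {..<n}" for m by (auto simp: I_def)
  have Ifin: "finite (I m)" for m using Isub finite_subset by blast
  have dIpos: "d i > 0" if "i \<in> I m" for i m using dpos that by (auto simp: I_def)
  have Csub: "C m \<subseteq> x ` {..<n}" if "m \<in> {1..k}" for m using Cunion that by blast
  have Cimg: "C m = x ` I m" if "m \<in> {1..k}" for m using Csub[OF that] by (auto simp: I_def)
  have Ine: "I m \<noteq> {}" if "m \<in> {1..k}" for m using Cne[OF that] Cimg[OF that] by auto
  have Idisj: "I m \<inter> I m' = {}" if "m \<in> {1..k}" "m' \<in> {1..k}" "m \<noteq> m'" for m m'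
    using Cdisj[OF that] by (auto simp: I_def)
  have Iunion: "(\<Union>m\<in>{1..k}. I m) = {..<n}"
  proof
    show "(\<Union>m\<in>{1..k}. I m) \<subseteq> {..<n}" using Isub by blast
    show "{..<n} \<subseteq> (\<Union>m\<in>{1..k}. I m)"
    proof
      fix i assume "i \<in> {..<n}"
      hence "x i \<in> (\<Union>l\<in>{1..k}. C l)" using Cunion by blast
      thus "i \<in> (\<Union>m\<in>{1..k}. I m)" using \<open>i \<in> {..<n}\<close> by (auto simp: I_def)
    qed
  qed
  have part: "(\<Sum>m\<in>{1..k}. \<Sum>i\<in>I m. h i) = (\<Sum>i<n. h i)" for h :: "nat \<Rightarrow> real"
  proof -
    have "(\<Sum>i<n. h i) = (\<Sum>i\<in>(\<Union>m\<in>{1..k}. I m). h i)" using Iunion by simp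
    also have "\<dots> = (\<Sum>m\<in>{1..k}. \<Sum>i\<in>I m. h i)"
    proof (rule sum.UNION_disjoint)
      show "\<forall>m\<in>{1..k}. \<forall>m'\<in>{1..k}. m \<noteq> m' \<longrightarrow> I m \<inter> I m' = {}" using Idisj by blast
    qed (auto simp: Ifin)
    finally show ?thesis by simp
  qed
  define vol where "vol m = (\<Sum>i\<in>I m. d i)" for m
  have volge: "vol m \<ge> real (card (I m))" for m
  proof -
    have "real (card (I m)) = (\<Sum>i\<in>I m. 1)" by simp
    also have "\<dots> \<le> vol m" unfolding vol_def using Isub by (intro sum_mono) (auto intro: dge1)
    finally show ?thesis .
  qed
  have volpos: "vol m > 0" if "m \<in> {1..k}" for m
  proof -
    have "card (I m) > 0" using Ine[OF that] Ifin card_gt_0_iff by blast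
    thus ?thesis using volge[of m] by linarith
  qed
  define gh where "gh m i = (if i \<in> I m then sqrt (d i) / sqrt (vol m) else 0)" for m i
  have gy: "ipn n (gh m) y = (\<Sum>i\<in>I m. sqrt (d i) * y i) / sqrt (vol m)" for m y
  proof -
    have "ipn n (gh m) y = (\<Sum>i<n. if i \<in> I m then sqrt (d i) * y i / sqrt (vol m) else 0)"
      unfolding ipn_def gh_def by (intro sum.cong) auto
    also have "\<dots> = (\<Sum>i\<in>I m. sqrt (d i) * y i / sqrt (vol m))" by (rule sum_if_subset[OF Isub])
    finally show ?thesis by (simp add: sum_divide_distrib)
  qed
  have gg: "ipn n (gh m) (gh m) = 1" if m: "m \<in> {1..k}" for m
  proof -
    have "ipn n (gh m) (gh m) = (\<Sum>i<n. if i \<in> I m then d i / vol m else 0)"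
      unfolding ipn_def gh_def using Isub dpos volpos[OF m]
      by (intro sum.cong refl) (auto simp: less_imp_le)
    also have "\<dots> = (\<Sum>i\<in>I m. d i / vol m)" by (rule sum_if_subset[OF Isub])
    also have "\<dots> = 1" using volpos[OF m] by (simp add: sum_divide_distrib[symmetric] vol_def)
    finally show ?thesis .
  qed
  have bblock: "(ipn n (gh m) y)^2 \<le> (\<Sum>i\<in>I m. (y i)^2)" if m: "m \<in> {1..k}" for m y
  proof -
    have "(ipn n (gh m) y)^2 = (\<Sum>i\<in>I m. (sqrt (d i) / sqrt (vol m)) * y i)^2"
      by (simp add: gy sum_divide_distrib)
    also have "\<dots> \<le> (\<Sum>i\<in>I m. (sqrt (d i) / sqrt (vol m))^2) * (\<Sum>i\<in>I m. (y i)^2)"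
      by (rule Cauchy_Schwarz_ineq_sum)
    also have "(\<Sum>i\<in>I m. (sqrt (d i) / sqrt (vol m))^2) = 1"
    proof -
      have "(\<Sum>i\<in>I m. (sqrt (d i) / sqrt (vol m))^2) = (\<Sum>i\<in>I m. d i / vol m)"
        using dIpos[of _ m] volpos[OF m] by (intro sum.cong refl) (auto simp: power_divide less_imp_le)
      also have "\<dots> = 1" using volpos[OF m] by (simp add: sum_divide_distrib[symmetric] vol_def)
      finally show ?thesis .
    qed
    finally show ?thesis by simp
  qed
  have bessel: "(\<Sum>m\<in>{1..k}. (ipn n (gh m) y)^2) \<le> ipn n y y" for y
  proof -
    have "(\<Sum>m\<in>{1..k}. (ipn n (gh m) y)^2) \<le> (\<Sum>m\<in>{1..k}. \<Sum>i\<in>I m. (y i)^2)"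
      by (intro sum_mono bblock) auto
    also have "\<dots> = ipn n y y" unfolding part ipn_def by (simp add: power2_eq_square)
    finally show ?thesis .
  qed
  define X where "X = x ` {..<n}"
  define w where "w m = Ksig K \<sigma> (set_dist (C m) (X - C m))" for m
  have w0: "w m \<ge> 0" for m
  proof (cases "set_dist (C m) (X - C m) = \<infinity>")
    case True
    have "0 \<le> (INF t\<in>{0::real..}. K t)"
      by (rule cINF_greatest) (auto intro: less_imp_le Kpos)
    thus ?thesis using True by (simp add: w_def Ksig_def)
  next
    case False
    have nn: "set_dist (C m) (X - C m) \<ge> 0" by (rule set_dist_nonneg)
    then obtain r where r: "set_dist (C m) (X - C m) = ereal r" "r \<ge> 0"
      using False by (cases "set_dist (C m) (X - C m)") auto
    have "K (r / \<sigma>) > 0" using r sigma by (intro Kpos) simp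
    thus ?thesis using r by (simp add: w_def Ksig_def less_imp_le)
  qed
  have Acut: "A i j \<le> w m" if m: "m \<in> {1..k}" and i: "i \<in> I m" and j: "j < n" "j \<notin> I m" for m i j
  proof -
    have xi: "x i \<in> C m" using i by (simp add: I_def)
    have xj: "x j \<in> X - C m" using j by (auto simp: I_def X_def)
    have le: "set_dist (C m) (X - C m) \<le> ereal (norm (x i - x j))" by (rule set_dist_le[OF xi xj])
    have nn: "set_dist (C m) (X - C m) \<ge> 0" by (rule set_dist_nonneg)
    obtain r where r: "set_dist (C m) (X - C m) = ereal r" "r \<ge> 0"
      using le nn by (cases "set_dist (C m) (X - C m)") auto
    have rle: "r \<le> norm (x i - x j)" using le r by simp
    have "K (norm (x i - x j) / \<sigma>) \<le> K (r / \<sigma>)"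
      using r rle sigma by (intro Kmono) (auto simp: divide_right_mono)
    thus ?thesis using r by (simp add: w_def Ksig_def A_def)
  qed
  define W where "W = (MAX m\<in>{1..k}. w m)"
  have wW: "w m \<le> W" if "m \<in> {1..k}" for m unfolding W_def using that by (intro Max_ge) auto
  have QFg: "QF (gh m) \<le> real n * w m" if m: "m \<in> {1..k}" for m
  proof -
    define ind where "ind i = (if i \<in> I m then 1 else (0::real))" for i
    have fi: "gh m i / sqrt (d i) = ind i / sqrt (vol m)" if "i < n" for i
      using dpos[OF that] by (simp add: gh_def ind_def)
    have "QF (gh m) = (1/2) * (\<Sum>i<n. \<Sum>j<n. A i j * (ind i / sqrt (vol m) - ind j / sqrt (vol m))^2)"
      unfolding QF_form by (simp add: fi)
    also have "\<dots> \<le> (1/2) * (\<Sum>i<n. \<Sum>j<n. w m * (ind i + ind j) / vol m)"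
    proof -
      have "A i j * (ind i / sqrt (vol m) - ind j / sqrt (vol m))^2 \<le> w m * (ind i + ind j) / vol m"
        if ij: "i < n" "j < n" for i j
      proof -
        have sq: "(ind i / sqrt (vol m) - ind j / sqrt (vol m))^2 = (ind i - ind j)^2 / vol m"
          using volpos[OF m] by (simp add: power_divide diff_divide_distrib[symmetric])
        have "A i j * (ind i - ind j)^2 \<le> w m * (ind i + ind j)"
        proof (cases "i \<in> I m")
          case True
          show ?thesis
          proof (cases "j \<in> I m")
            case True thus ?thesis using \<open>i \<in> I m\<close> w0[of m] by (simp add: ind_def)
          next
            case False thus ?thesis using \<open>i \<in> I m\<close> Acut[OF m \<open>i \<in> I m\<close> ij(2) False] by (simp add: ind_def)
          qed
        next
          case False
          show ?thesis
          proof (cases "j \<in> I m")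
            case True thus ?thesis using False Acut[OF m True ij(1) False] Asym[of i j] by (simp add: ind_def)
          next
            case False2: False thus ?thesis using False w0[of m] by (simp add: ind_def)
          qed
        qed
        hence "A i j * (ind i - ind j)^2 / vol m \<le> w m * (ind i + ind j) / vol m"
          using volpos[OF m] by (intro divide_right_mono) auto
        thus ?thesis by (simp add: sq)
      qed
      thus ?thesis by (intro mult_left_mono sum_mono) auto
    qed
    also have "\<dots> = w m / vol m * (real n * real (card (I m)))"
    proof -
      have s1: "(\<Sum>i<n. ind i) = real (card (I m))"
        using sum_if_subset[OF Isub[of m], where h = "\<lambda>_. 1"] by (simp add: ind_def)
      have "(\<Sum>i<n. \<Sum>j<n. w m * (ind i + ind j) / vol m) = (\<Sum>i<n. \<Sum>j<n. w m / vol m * (ind i + ind j))"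
        by (intro sum.cong refl) simp
      also have "\<dots> = w m / vol m * (\<Sum>i<n. \<Sum>j<n. ind i + ind j)"
        by (simp only: sum_distrib_left)
      also have "(\<Sum>i<n. \<Sum>j<n. ind i + ind j) = (\<Sum>i<n. real n * ind i + real (card (I m)))"
        by (intro sum.cong refl) (simp add: sum.distrib s1)
      also have "\<dots> = 2 * real n * real (card (I m))"
        by (simp add: sum.distrib sum_distrib_left[symmetric] s1)
      finally show ?thesis by simp
    qed
    also have "\<dots> \<le> w m / vol m * (real n * vol m)"
      using volge[of m] w0[of m] volpos[OF m] by (intro mult_left_mono) auto
    also have "\<dots> = real n * w m" using volpos[OF m] by simp
    finally show ?thesis .
  qed
  have upper: "(\<Sum>l<k. e ! l) \<le> real n * real k * W"
  proof -
    define p where "p j = (\<Sum>m\<in>{1..k}. (ipn n (gh m) (v j))^2)" for j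
    have "(\<Sum>l<k. e ! l) \<le> (\<Sum>j<n. e ! j * p j)"
    proof (rule rearr[OF k1 less_imp_le[OF kn]])
      show "e ! i \<le> e ! j" if "i \<le> j" "j < n" for i j
        using sorted_e that len_e by (simp add: sorted_nth_mono)
      show "0 \<le> p j" for j unfolding p_def by (auto intro: sum_nonneg)
      show "p j \<le> 1" if "j < n" for j
        using bessel[of "v j"] ON that unfolding p_def by (simp add: ipn_sym[of n "gh _"])
      show "(\<Sum>j<n. p j) = real k"
      proof -
        have "(\<Sum>j<n. p j) = (\<Sum>m\<in>{1..k}. \<Sum>j<n. (ipn n (gh m) (v j))^2)"
          unfolding p_def by (rule sum.swap)
        also have "\<dots> = (\<Sum>m\<in>{1..k}. (1::real))"
          using SP1 gg by (intro sum.cong refl) auto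
        finally show ?thesis by simp
      qed
    qed
    also have "(\<Sum>j<n. e ! j * p j) = (\<Sum>m\<in>{1..k}. QF (gh m))"
      unfolding p_def QF_spec by (simp only: sum_distrib_left) (rule sum.swap)
    also have "\<dots> \<le> (\<Sum>m\<in>{1..k}. real n * W)"
    proof (rule sum_mono)
      fix m assume m: "m \<in> {1..k}"
      have "real n * w m \<le> real n * W" using wW[OF m] by (intro mult_left_mono) auto
      thus "QF (gh m) \<le> real n * W" using QFg[OF m] by linarith
    qed
    also have "\<dots> = real n * real k * W" by simp
    finally show ?thesis .
  qed
  define \<gamma> where "\<gamma> l = K (\<delta> l / \<sigma>)" for l
  obtain l0 where l0: "l0 \<in> {1..k}" and l0min: "\<And>l. l \<in> {1..k} \<Longrightarrow> \<gamma> l0 \<le> \<gamma> l"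
  proof -
    have fin: "finite (\<gamma> ` {1..k})" "\<gamma> ` {1..k} \<noteq> {}" using k1 by auto
    obtain l0 where l0: "l0 \<in> {1..k}" "\<gamma> l0 = Min (\<gamma> ` {1..k})" using Min_in[OF fin] by auto
    have "\<gamma> l0 \<le> \<gamma> l" if "l \<in> {1..k}" for l using l0(2) Min_le[OF fin(1)] that by simp
    thus ?thesis using that l0(1) by blast
  qed
  define g0 where "g0 = \<gamma> l0"
  have g0pos: "g0 > 0" unfolding g0_def \<gamma>_def using delta_nonneg[OF l0] sigma by (intro Kpos) simp
  have conn: "\<exists>a\<in>R. \<exists>b\<in>I m - R. A a b \<ge> g0"
    if m: "m \<in> {1..k}" and R: "R \<subseteq> I m" "R \<noteq> {}" "R \<noteq> I m" for m R
  proof -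
    define S1 where "S1 = x ` R"
    define S2 where "S2 = x ` (I m - R)"
    have ne1: "S1 \<noteq> {}" using R by (simp add: S1_def)
    have ne2: "S2 \<noteq> {}" using R by (auto simp: S2_def)
    have un: "S1 \<union> S2 = C m" using R Cimg[OF m] by (auto simp: S1_def S2_def)
    have int: "S1 \<inter> S2 = {}"
    proof -
      have "S1 \<inter> S2 = x ` (R \<inter> (I m - R))"
        unfolding S1_def S2_def using R Isub[of m]
        by (intro inj_on_image_Int[OF inj, symmetric]) auto
      thus ?thesis by simp
    qed
    have "\<not> set_dist S1 S2 > ereal (\<delta> m)"
      using Cconn[OF m] ne1 ne2 un int unfolding connected_at_dist_def by blast
    hence sdle: "set_dist S1 S2 \<le> ereal (\<delta> m)" by simp
    have fin1: "finite S1" "finite S2" using Ifin[of m] R finite_subset by (auto simp: S1_def S2_def)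
    obtain a' b' where ab': "a' \<in> S1" "b' \<in> S2" "set_dist S1 S2 = ereal (norm (a' - b'))"
      using set_dist_attained[OF fin1 ne1 ne2] by blast
    obtain a where a: "a \<in> R" "a' = x a" using ab'(1) by (auto simp: S1_def)
    obtain b where b: "b \<in> I m - R" "b' = x b" using ab'(2) by (auto simp: S2_def)
    have nle: "norm (x a - x b) \<le> \<delta> m" using sdle ab'(3) a b by simp
    have "\<gamma> m \<le> A a b"
      unfolding \<gamma>_def A_def using nle sigma by (intro Kmono) (auto simp: divide_right_mono)
    thus ?thesis using l0min[OF m] a b by (force simp: g0_def)
  qed
  have poinc: "g0 * ((\<Sum>i\<in>I m. d i * (f i)^2) - (\<Sum>i\<in>I m. d i * f i)^2 / (\<Sum>i\<in>I m. d i))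
      \<le> real n ^ 3 * Eg A f (I m)" if m: "m \<in> {1..k}" for m f
  proof (rule cluster_poincare[OF Ifin Ine[OF m] _ g0pos])
    show "card (I m) \<le> n" using card_mono[OF _ Isub[of m]] by simp
    show "\<And>i. i \<in> I m \<Longrightarrow> 0 < d i" using dIpos by blast
    show "\<And>i. i \<in> I m \<Longrightarrow> d i \<le> real n" using dle by blast
    show "\<And>a b. a \<in> I m \<Longrightarrow> b \<in> I m \<Longrightarrow> 0 \<le> A a b" using Apos less_imp_le by blast
    show "\<And>R. R \<subseteq> I m \<Longrightarrow> R \<noteq> {} \<Longrightarrow> R \<noteq> I m \<Longrightarrow> \<exists>a\<in>R. \<exists>b\<in>I m - R. g0 \<le> A a b"
      using conn[OF m] by blast
  qed
  have LB: "g0 * (ipn n y y - (\<Sum>m\<in>{1..k}. (ipn n (gh m) y)^2)) \<le> 2 * real n ^ 3 * QF y" for y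
  proof -
    define f where "f i = y i / sqrt (d i)" for i
    have cl: "g0 * ((\<Sum>i\<in>I m. (y i)^2) - (ipn n (gh m) y)^2) \<le> real n ^ 3 * Eg A f (I m)"
      if m: "m \<in> {1..k}" for m
    proof -
      have e1: "(\<Sum>i\<in>I m. d i * (f i)^2) = (\<Sum>i\<in>I m. (y i)^2)"
      proof (intro sum.cong refl)
        fix i assume "i \<in> I m"
        hence di: "d i > 0" using dIpos by blast
        thus "d i * (f i)^2 = (y i)^2" by (simp add: f_def power_divide less_imp_le)
      qed
      have e2: "(\<Sum>i\<in>I m. d i * f i) = (\<Sum>i\<in>I m. sqrt (d i) * y i)"
      proof (intro sum.cong refl)
        fix i assume "i \<in> I m"
        hence di: "d i > 0" using dIpos by blast
        have "d i = sqrt (d i) * sqrt (d i)" using di by simp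
        thus "d i * f i = sqrt (d i) * y i" unfolding f_def using di
          by (metis (no_types) nonzero_mult_div_cancel_right real_sqrt_gt_0_iff times_divide_eq_right less_numeral_extra(3) mult.commute)
      qed
      have e3: "(ipn n (gh m) y)^2 = (\<Sum>i\<in>I m. sqrt (d i) * y i)^2 / (\<Sum>i\<in>I m. d i)"
        using volpos[OF m] by (simp add: gy power_divide vol_def)
      show ?thesis using poinc[OF m, of f] by (simp only: e1 e2 e3)
    qed
    have "g0 * (ipn n y y - (\<Sum>m\<in>{1..k}. (ipn n (gh m) y)^2))
        = (\<Sum>m\<in>{1..k}. g0 * ((\<Sum>i\<in>I m. (y i)^2) - (ipn n (gh m) y)^2))"
    proof -
      have "ipn n y y = (\<Sum>m\<in>{1..k}. \<Sum>i\<in>I m. (y i)^2)" unfolding part ipn_def by (simp add: power2_eq_square)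
      thus ?thesis by (simp add: sum_subtractf sum_distrib_left right_diff_distrib)
    qed
    also have "\<dots> \<le> (\<Sum>m\<in>{1..k}. real n ^ 3 * Eg A f (I m))" by (intro sum_mono cl) auto
    also have "\<dots> \<le> (\<Sum>m\<in>{1..k}. real n ^ 3 * (\<Sum>a\<in>I m. \<Sum>b<n. A a b * (f a - f b)^2))"
    proof (intro sum_mono mult_left_mono)
      fix m assume "m \<in> {1..k}"
      show "Eg A f (I m) \<le> (\<Sum>a\<in>I m. \<Sum>b<n. A a b * (f a - f b)^2)"
        unfolding Eg_def using Isub[of m] less_imp_le[OF Apos]
        by (intro sum_mono sum_mono2) auto
    qed simp
    also have "\<dots> = real n ^ 3 * (\<Sum>a<n. \<Sum>b<n. A a b * (f a - f b)^2)"
      by (simp only: sum_distrib_left[symmetric] part)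
    also have "\<dots> = 2 * real n ^ 3 * QF y" by (simp add: QF_form f_def)
    finally show ?thesis .
  qed
  have evj: "QF (v j) = e ! j" if j: "j < n" for j
  proof -
    have "QF (v j) = (\<Sum>i<n. if i = j then e ! i else 0)"
      unfolding QF_spec using ON j by (intro sum.cong refl) (auto simp: ipn_sym[of n "v j"])
    thus ?thesis using j by simp
  qed
  have lower: "g0 \<le> 2 * real n ^ 3 * (real k + 1) * e ! k"
  proof -
    have each: "g0 * (1 - (\<Sum>m\<in>{1..k}. (ipn n (gh m) (v j))^2)) \<le> 2 * real n ^ 3 * e ! j"
      if j: "j \<le> k" for j
      using LB[of "v j"] ON evj j kn by simp
    have s1: "(\<Sum>j\<le>k. \<Sum>m\<in>{1..k}. (ipn n (gh m) (v j))^2) \<le> real k"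
    proof -
      have "(\<Sum>j\<le>k. \<Sum>m\<in>{1..k}. (ipn n (gh m) (v j))^2) = (\<Sum>m\<in>{1..k}. \<Sum>j\<le>k. (ipn n (gh m) (v j))^2)"
        by (rule sum.swap)
      also have "\<dots> \<le> (\<Sum>m\<in>{1..k}. \<Sum>j<n. (ipn n (gh m) (v j))^2)"
        using kn by (intro sum_mono sum_mono2) auto
      also have "\<dots> = (\<Sum>m\<in>{1..k}. (1::real))" using SP1 gg by (intro sum.cong refl) auto
      finally show ?thesis by simp
    qed
    have "g0 \<le> g0 * ((real k + 1) - (\<Sum>j\<le>k. \<Sum>m\<in>{1..k}. (ipn n (gh m) (v j))^2))"
      using s1 g0pos by simp
    also have "\<dots> = (\<Sum>j\<le>k. g0 * (1 - (\<Sum>m\<in>{1..k}. (ipn n (gh m) (v j))^2)))"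
      by (simp add: sum_subtractf sum_distrib_left right_diff_distrib)
    also have "\<dots> \<le> (\<Sum>j\<le>k. 2 * real n ^ 3 * e ! j)" by (intro sum_mono each) auto
    also have "\<dots> \<le> (\<Sum>j\<le>k. 2 * real n ^ 3 * e ! k)"
      using sorted_e len_e kn by (intro sum_mono mult_left_mono) (auto simp: sorted_nth_mono)
    also have "\<dots> = 2 * real n ^ 3 * (real k + 1) * e ! k" by simp
    finally show ?thesis .
  qed
  have final_low: "(MIN (l, m)\<in>{1..k} \<times> {1..k}.
           K (\<delta> l / \<sigma>) / (9 * real n ^ 3 * (real k + 1) ^ 4)
           - real n ^ 3 * real k * Ksig K \<sigma> (set_dist (C m) (x ` {..<n} - C m))) \<le> e ! k"
  proof -
    have mem: "(l0, 1) \<in> {1..k} \<times> {1..k}" using l0 k1 by auto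
    have "(MIN (l, m)\<in>{1..k} \<times> {1..k}.
           K (\<delta> l / \<sigma>) / (9 * real n ^ 3 * (real k + 1) ^ 4)
           - real n ^ 3 * real k * Ksig K \<sigma> (set_dist (C m) (x ` {..<n} - C m)))
         \<le> g0 / (9 * real n ^ 3 * (real k + 1) ^ 4) - real n ^ 3 * real k * w 1"
    proof -
      define F where "F = (\<lambda>(l, m). K (\<delta> l / \<sigma>) / (9 * real n ^ 3 * (real k + 1) ^ 4)
           - real n ^ 3 * real k * Ksig K \<sigma> (set_dist (C m) (x ` {..<n} - C m)))"
      have "Min (F ` ({1..k} \<times> {1..k})) \<le> F (l0, 1)"
        by (rule Min_le) (use mem in auto)
      thus ?thesis unfolding F_def by (simp add: g0_def \<gamma>_def w_def X_def)
    qed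
    also have "\<dots> \<le> g0 / (9 * real n ^ 3 * (real k + 1) ^ 4)" using w0[of 1] by simp
    also have "\<dots> \<le> g0 / (2 * real n ^ 3 * (real k + 1))"
    proof (rule divide_left_mono)
      show "0 \<le> g0" using g0pos by simp
      have n0: "real n > 0" using kn by simp
      show "0 < 9 * real n ^ 3 * (real k + 1) ^ 4 * (2 * real n ^ 3 * (real k + 1))" using n0 by simp
      have "(real k + 1) \<le> (real k + 1) ^ 4" by (rule self_le_power) auto
      thus "2 * real n ^ 3 * (real k + 1) \<le> 9 * real n ^ 3 * (real k + 1) ^ 4" using n0 by simp
    qed
    also have "\<dots> \<le> e ! k"
    proof -
      have pos: "2 * real n ^ 3 * (real k + 1) > 0" using kn by simp
      show ?thesis using lower pos by (simp add: divide_le_eq mult.commute)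
    qed
    finally show ?thesis .
  qed
  show ?thesis using upper final_low by (simp add: W_def w_def X_def)
qed


end
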